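(* Let $\Lambda$ be a row-finite $2$-graph with no sources. Suppose that every vertex of $\Lambda$ has an aperiodic quartet (an $(a,b)$-aperiodic quartet for some positive integers $a,b$). Then $\Lambda$ is strongly aperiodic.
   Context: A $k$-graph is a countable category $\Lambda$ with a functor $d:\Lambda\to\mathbb{N}^k$ satisfying the factorization property: whenever $d(\lambda)=m+n$ there are unique $\mu,\nu$ with $\lambda=\mu\nu$, $d(\mu)=m$, $d(\nu)=n$. $\Lambda^n=d^{-1}(n)$, $\Lambda^0$ the vertices, $r,s$ range and source, $v\Lambda^n w=\{\lambda:r(\lambda)=v,d(\lambda)=n,s(\lambda)=w\}$. Row-finite: each $v\Lambda^n$ finite; no sources: $v\Lambda^{e_i}\ne\emptyset$ for all $v,i$. For $0\le m\le n\le d(\lambda)$, $\lambda(m,n)$ is the unique path with $\lambda=\lambda'\lambda(m,n)\lambda''$, $d(\lambda')=m$, $d(\lambda(m,n))=n-m$. No local periodicity at $v$: for each $m\neq n\in\mathbb{N}^k$ there is $\lambda$ with $r(\lambda)=v$, $d(\lambda)\ge m\vee n$ and $\lambda(m,m+d(\lambda)-(m\vee n))\neq\lambda(n,n+d(\lambda)-(m\vee n))$; aperiodic: no local periodicity at every vertex. Write $v\le w$ iff there is a path with range $v$ and source $w$. $H\subseteq\Lambda^0$ is hereditary if $v\in H$, $v\le w$ imply $w\in H$; saturated if for every $v$: $r^{-1}(v)\ne\emptyset$ and $\{s(\lambda):\lambda\in v\Lambda^{e_i}\}\subseteq H$ for some $i$ imply $v\in H$. For saturated hereditary $H\subsetneq\Lambda^0$,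 $\Gamma(\Lambda\setminus H)$ is the $k$-graph with vertices $\Lambda^0\setminus H$ and morphisms $\{\lambda:s(\lambda)\notin H\}$ (a row-finite $k$-graph with no sources). $\Lambda$ is strongly aperiodic if $\Gamma(\Lambda\setminus H)$ is aperiodic for all saturated hereditary $H\subsetneq\Lambda^0$. An $(a,b)$-aperiodic quartet at $u$ is $(\alpha_1,\alpha_2,\beta_1,\beta_2)$ with $\alpha_1\neq\alpha_2\in u\Lambda^{ae_1}u$, $\beta_1\neq\beta_2\in u\Lambda^{be_2}u$, $\beta_2\alpha_1=\alpha_1\beta_2$, $\beta_2\alpha_2=\alpha_2\beta_2$, $\beta_1\alpha_1=\alpha_2\beta_1$, $\beta_1\alpha_2=\alpha_1\beta_1$. *)

theory Defs
  imports Main "HOL-Library.Product_Plus" "HOL-Library.Product_Order" "HOL-Library.Countable_Set"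
begin

text \<open>A 2-graph, presented as a small category whose morphisms lie in the set mor,
  with range/source maps (valued in identity morphisms), partial composition cmp
  (cmp x y means x followed-by-range convention: x y with src x = rng y) and degree
  functor deg into N^2 = nat \<times> nat (componentwise order, sup = join).\<close>

record 'a kgraph2 =
  mor :: "'a set"
  rng :: "'a \<Rightarrow> 'a"
  src :: "'a \<Rightarrow> 'a"
  cmp :: "'a \<Rightarrow> 'a \<Rightarrow> 'a"
  deg :: "'a \<Rightarrow> nat \<times> nat"

definition is_2graph :: "('a, 'b) kgraph2_scheme \<Rightarrow> bool" where
  "is_2graph G \<longleftrightarrow>
     countable (mor G) \<and>
     (\<forall>x\<in>mor G. rng G x \<in> mor G \<and> src G x \<in> mor G) \<and>
     (\<forall>x\<in>mor G. rng G (rng G x) = rng G x \<and> src G (rng G x) = rng G x \<and>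
                 rng G (src G x) = src G x \<and> src G (src G x) = src G x) \<and>
     (\<forall>x\<in>mor G. cmp G (rng G x) x = x \<and> cmp G x (src G x) = x) \<and>
     (\<forall>x\<in>mor G. \<forall>y\<in>mor G. src G x = rng G y \<longrightarrow>
         cmp G x y \<in> mor G \<and> rng G (cmp G x y) = rng G x \<and> src G (cmp G x y) = src G y) \<and>
     (\<forall>x\<in>mor G. \<forall>y\<in>mor G. \<forall>z\<in>mor G. src G x = rng G y \<and> src G y = rng G z \<longrightarrow>
         cmp G (cmp G x y) z = cmp G x (cmp G y z)) \<and>
     (\<forall>x\<in>mor G. deg G (rng G x) = 0) \<and>
     (\<forall>x\<in>mor G. \<forall>y\<in>mor G. src G x = rng G y \<longrightarrow> deg G (cmp G x y) = deg G x + deg G y) \<and>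
     (\<forall>l\<in>mor G. \<forall>m n. deg G l = m + n \<longrightarrow>
         (\<exists>!p. fst p \<in> mor G \<and> snd p \<in> mor G \<and> src G (fst p) = rng G (snd p) \<and>
               l = cmp G (fst p) (snd p) \<and> deg G (fst p) = m \<and> deg G (snd p) = n))"

definition verts :: "('a, 'b) kgraph2_scheme \<Rightarrow> 'a set" where
  "verts G = {v \<in> mor G. deg G v = 0}"

definition e1 :: "nat \<times> nat" where "e1 = (1, 0)"
definition e2 :: "nat \<times> nat" where "e2 = (0, 1)"

definition paths_rng_deg :: "('a, 'b) kgraph2_scheme \<Rightarrow> 'a \<Rightarrow> nat \<times> nat \<Rightarrow> 'a set" where
  "paths_rng_deg G v n = {l \<in> mor G. rng G l = v \<and> deg G l = n}"

definition paths_rng_deg_src :: "('a, 'b) kgraph2_scheme \<Rightarrow> 'a \<Rightarrow> nat \<times> nat \<Rightarrow> 'a \<Rightarrow> 'a set" where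
  "paths_rng_deg_src G v n w = {l \<in> mor G. rng G l = v \<and> deg G l = n \<and> src G l = w}"

definition row_finite :: "('a, 'b) kgraph2_scheme \<Rightarrow> bool" where
  "row_finite G \<longleftrightarrow> (\<forall>v\<in>verts G. \<forall>n. finite (paths_rng_deg G v n))"

definition no_sources :: "('a, 'b) kgraph2_scheme \<Rightarrow> bool" where
  "no_sources G \<longleftrightarrow> (\<forall>v\<in>verts G. paths_rng_deg G v e1 \<noteq> {} \<and> paths_rng_deg G v e2 \<noteq> {})"

definition seg :: "('a, 'b) kgraph2_scheme \<Rightarrow> 'a \<Rightarrow> nat \<times> nat \<Rightarrow> nat \<times> nat \<Rightarrow> 'a" where
  "seg G l m n = (THE p. \<exists>x y. x \<in> mor G \<and> p \<in> mor G \<and> y \<in> mor G \<and>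
       src G x = rng G p \<and> src G p = rng G y \<and>
       l = cmp G (cmp G x p) y \<and> deg G x = m \<and> deg G p = n - m)"

definition no_local_periodicity :: "('a, 'b) kgraph2_scheme \<Rightarrow> 'a \<Rightarrow> bool" where
  "no_local_periodicity G v \<longleftrightarrow>
     (\<forall>m n. m \<noteq> n \<longrightarrow>
        (\<exists>l\<in>mor G. rng G l = v \<and> sup m n \<le> deg G l \<and>
            seg G l m (m + (deg G l - sup m n)) \<noteq> seg G l n (n + (deg G l - sup m n))))"

definition aperiodic :: "('a, 'b) kgraph2_scheme \<Rightarrow> bool" where
  "aperiodic G \<longleftrightarrow> (\<forall>v\<in>verts G. no_local_periodicity G v)"

definition path_le :: "('a, 'b) kgraph2_scheme \<Rightarrow> 'a \<Rightarrow> 'a \<Rightarrow> bool" where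
  "path_le G v w \<longleftrightarrow> (\<exists>l\<in>mor G. rng G l = v \<and> src G l = w)"

definition hereditary :: "('a, 'b) kgraph2_scheme \<Rightarrow> 'a set \<Rightarrow> bool" where
  "hereditary G H \<longleftrightarrow> (\<forall>v\<in>H. \<forall>w\<in>verts G. path_le G v w \<longrightarrow> w \<in> H)"

definition saturated :: "('a, 'b) kgraph2_scheme \<Rightarrow> 'a set \<Rightarrow> bool" where
  "saturated G H \<longleftrightarrow>
     (\<forall>v\<in>verts G. {l \<in> mor G. rng G l = v} \<noteq> {} \<and>
        (\<exists>i\<in>{e1, e2}. src G ` paths_rng_deg G v i \<subseteq> H) \<longrightarrow> v \<in> H)"

definition Gamma :: "('a, 'b) kgraph2_scheme \<Rightarrow> 'a set \<Rightarrow> ('a, 'b) kgraph2_scheme" where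
  "Gamma G H = G\<lparr>mor := {l \<in> mor G. src G l \<notin> H}\<rparr>"

definition strongly_aperiodic :: "('a, 'b) kgraph2_scheme \<Rightarrow> bool" where
  "strongly_aperiodic G \<longleftrightarrow>
     (\<forall>H. H \<subseteq> verts G \<and> H \<noteq> verts G \<and> hereditary G H \<and> saturated G H
          \<longrightarrow> aperiodic (Gamma G H))"

definition aperiodic_quartet ::
  "('a, 'b) kgraph2_scheme \<Rightarrow> nat \<Rightarrow> nat \<Rightarrow> 'a \<Rightarrow> 'a \<Rightarrow> 'a \<Rightarrow> 'a \<Rightarrow> 'a \<Rightarrow> bool" where
  "aperiodic_quartet G a b u a1 a2 b1 b2 \<longleftrightarrow>
     a1 \<noteq> a2 \<and> a1 \<in> paths_rng_deg_src G u (a, 0) u \<and> a2 \<in> paths_rng_deg_src G u (a, 0) u \<and>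
     b1 \<noteq> b2 \<and> b1 \<in> paths_rng_deg_src G u (0, b) u \<and> b2 \<in> paths_rng_deg_src G u (0, b) u \<and>
     cmp G b2 a1 = cmp G a1 b2 \<and> cmp G b2 a2 = cmp G a2 b2 \<and>
     cmp G b1 a1 = cmp G a2 b1 \<and> cmp G b1 a2 = cmp G a1 b1"

end

theory Submission
  imports Defs
begin

context
  fixes G :: "('a, 'b) kgraph2_scheme"
  assumes G2: "is_2graph G"
begin

lemma g_all: "(\<forall>x\<in>mor G. rng G x \<in> mor G \<and> src G x \<in> mor G) \<and>
  (\<forall>x\<in>mor G. rng G (rng G x) = rng G x \<and> src G (rng G x) = rng G x \<and>
                 rng G (src G x) = src G x \<and> src G (src G x) = src G x) \<and>
  (\<forall>x\<in>mor G. cmp G (rng G x) x = x \<and> cmp G x (src G x) = x) \<and>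
  (\<forall>x\<in>mor G. \<forall>y\<in>mor G. src G x = rng G y \<longrightarrow>
         cmp G x y \<in> mor G \<and> rng G (cmp G x y) = rng G x \<and> src G (cmp G x y) = src G y) \<and>
  (\<forall>x\<in>mor G. \<forall>y\<in>mor G. \<forall>z\<in>mor G. src G x = rng G y \<and> src G y = rng G z \<longrightarrow>
         cmp G (cmp G x y) z = cmp G x (cmp G y z)) \<and>
  (\<forall>x\<in>mor G. deg G (rng G x) = 0) \<and>
  (\<forall>x\<in>mor G. \<forall>y\<in>mor G. src G x = rng G y \<longrightarrow> deg G (cmp G x y) = deg G x + deg G y) \<and>
  (\<forall>l\<in>mor G. \<forall>m n. deg G l = m + n \<longrightarrow>
         (\<exists>!p. fst p \<in> mor G \<and> snd p \<in> mor G \<and> src G (fst p) = rng G (snd p) \<and>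
               l = cmp G (fst p) (snd p) \<and> deg G (fst p) = m \<and> deg G (snd p) = n))"
  using G2 unfolding is_2graph_def by (rule conjunct2)

lemmas g_p1 = g_all[THEN conjunct1]
lemmas g_p2 = g_all[THEN conjunct2, THEN conjunct1]
lemmas g_p3 = g_all[THEN conjunct2, THEN conjunct2, THEN conjunct1]
lemmas g_p4 = g_all[THEN conjunct2, THEN conjunct2, THEN conjunct2, THEN conjunct1]
lemmas g_p5 = g_all[THEN conjunct2, THEN conjunct2, THEN conjunct2, THEN conjunct2, THEN conjunct1]
lemmas g_p6 = g_all[THEN conjunct2, THEN conjunct2, THEN conjunct2, THEN conjunct2, THEN conjunct2, THEN conjunct1]
lemmas g_p7 = g_all[THEN conjunct2, THEN conjunct2, THEN conjunct2, THEN conjunct2, THEN conjunct2, THEN conjunct2, THEN conjunct1]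
lemmas g_p8 = g_all[THEN conjunct2, THEN conjunct2, THEN conjunct2, THEN conjunct2, THEN conjunct2, THEN conjunct2, THEN conjunct2]

lemma g_rs: "x \<in> mor G \<Longrightarrow> rng G x \<in> mor G \<and> src G x \<in> mor G"
  using g_p1 by blast

lemma g_idem: "x \<in> mor G \<Longrightarrow> rng G (rng G x) = rng G x \<and> src G (rng G x) = rng G x \<and>
                 rng G (src G x) = src G x \<and> src G (src G x) = src G x"
  using g_p2[rule_format] by blast

lemma g_unit: "x \<in> mor G \<Longrightarrow> cmp G (rng G x) x = x \<and> cmp G x (src G x) = x"
  using g_p3[rule_format] by blast

lemma g_cmp: "x \<in> mor G \<Longrightarrow> y \<in> mor G \<Longrightarrow> src G x = rng G y \<Longrightarrow>
         cmp G x y \<in> mor G \<and> rng G (cmp G x y) = rng G x \<and> src G (cmp G x y) = src G y"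
  using g_p4[rule_format] by blast

lemma g_assoc: "x \<in> mor G \<Longrightarrow> y \<in> mor G \<Longrightarrow> z \<in> mor G \<Longrightarrow> src G x = rng G y \<Longrightarrow> src G y = rng G z \<Longrightarrow>
         cmp G (cmp G x y) z = cmp G x (cmp G y z)"
  using g_p5[rule_format] by blast

lemma g_deg_rng: "x \<in> mor G \<Longrightarrow> deg G (rng G x) = 0"
  using g_p6[rule_format] by blast

lemma g_deg_cmp: "x \<in> mor G \<Longrightarrow> y \<in> mor G \<Longrightarrow> src G x = rng G y \<Longrightarrow> deg G (cmp G x y) = deg G x + deg G y"
  using g_p7[rule_format] by blast

lemma g_fact: "l \<in> mor G \<Longrightarrow> deg G l = m + n \<Longrightarrow>
         (\<exists>!p. fst p \<in> mor G \<and> snd p \<in> mor G \<and> src G (fst p) = rng G (snd p) \<and>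
               l = cmp G (fst p) (snd p) \<and> deg G (fst p) = m \<and> deg G (snd p) = n)"
  by (rule g_p8[rule_format])

lemma g_fact_ex: "l \<in> mor G \<Longrightarrow> deg G l = m + n \<Longrightarrow>
   \<exists>x y. x \<in> mor G \<and> y \<in> mor G \<and> src G x = rng G y \<and> l = cmp G x y \<and> deg G x = m \<and> deg G y = n"
  using g_fact[of l m n] by auto

lemma g_fact_uniq: "x \<in> mor G \<Longrightarrow> y \<in> mor G \<Longrightarrow> src G x = rng G y \<Longrightarrow>
   x' \<in> mor G \<Longrightarrow> y' \<in> mor G \<Longrightarrow> src G x' = rng G y' \<Longrightarrow>
   cmp G x y = cmp G x' y' \<Longrightarrow> deg G x = deg G x' \<Longrightarrow> deg G y = deg G y' \<Longrightarrow> x = x' \<and> y = y'"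
proof -
  assume a: "x \<in> mor G" "y \<in> mor G" "src G x = rng G y" "x' \<in> mor G" "y' \<in> mor G" "src G x' = rng G y'"
     "cmp G x y = cmp G x' y'" "deg G x = deg G x'" "deg G y = deg G y'"
  let ?l = "cmp G x y"
  have l: "?l \<in> mor G" "deg G ?l = deg G x + deg G y" using a g_cmp g_deg_cmp by auto
  let ?P = "\<lambda>p. fst p \<in> mor G \<and> snd p \<in> mor G \<and> src G (fst p) = rng G (snd p) \<and>
               ?l = cmp G (fst p) (snd p) \<and> deg G (fst p) = deg G x \<and> deg G (snd p) = deg G y"
  have u: "\<exists>!p. ?P p" by (rule g_fact[OF l])
  have "?P (x, y)" "?P (x', y')" using a by auto
  note pp = this
  from u obtain p where "\<forall>q. ?P q \<longrightarrow> q = p" by (elim ex1E) blast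
  with pp have "(x, y) = (x', y')" by simp
  then show ?thesis by simp
qed

lemma g_deg0: "x \<in> mor G \<Longrightarrow> deg G x = 0 \<Longrightarrow> rng G x = x \<and> src G x = x"
proof -
  assume x: "x \<in> mor G" "deg G x = 0"
  have r: "rng G x \<in> mor G" "src G x \<in> mor G" using g_rs[OF x(1)] by auto
  have i: "src G (rng G x) = rng G x" "rng G (src G x) = src G x" using g_idem[OF x(1)] by auto
  have u: "cmp G (rng G x) x = x" "cmp G x (src G x) = x" using g_unit[OF x(1)] by auto
  have d: "deg G (rng G x) = 0" "deg G (src G x) = 0"
    using g_deg_rng[OF x(1)] g_deg_rng[OF r(2)] i(2) by auto
  have "rng G x = x \<and> x = src G x"
    by (rule g_fact_uniq[OF r(1) x(1) i(1) x(1) r(2) i(2)[symmetric]]) (use u d x in auto)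
  then show ?thesis using i by metis
qed

lemma g_src_vert: "x \<in> mor G \<Longrightarrow> src G x \<in> verts G"
proof -
  assume x: "x \<in> mor G"
  have r: "src G x \<in> mor G" using g_rs[OF x] by auto
  have "deg G (src G x) = 0" using g_deg_rng[OF r] g_idem[OF x] by auto
  then show ?thesis using r unfolding verts_def by auto
qed

definition wit :: "'a \<Rightarrow> nat \<times> nat \<Rightarrow> nat \<times> nat \<Rightarrow> 'a \<Rightarrow> 'a \<Rightarrow> 'a \<Rightarrow> bool" where
  "wit l m n x p y \<longleftrightarrow> x \<in> mor G \<and> p \<in> mor G \<and> y \<in> mor G \<and>
       src G x = rng G p \<and> src G p = rng G y \<and>
       l = cmp G (cmp G x p) y \<and> deg G x = m \<and> deg G p = n - m"

lemma wit_uniq: "wit l m n x p y \<Longrightarrow> wit l m n x' p' y' \<Longrightarrow> x = x' \<and> p = p' \<and> y = y'"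
proof -
  assume w: "wit l m n x p y" "wit l m n x' p' y'"
  note W = w[unfolded wit_def]
  have c: "cmp G x p \<in> mor G" "cmp G x' p' \<in> mor G" "deg G (cmp G x p) = deg G (cmp G x' p')"
    "src G (cmp G x p) = rng G y" "src G (cmp G x' p') = rng G y'"
    using W g_cmp g_deg_cmp by auto
  have "deg G (cmp G x p) + deg G y = deg G (cmp G x' p') + deg G y'"
    using W c g_deg_cmp by metis
  then have "deg G y = deg G y'" using c(3) by simp
  then have 1: "cmp G x p = cmp G x' p' \<and> y = y'"
    using g_fact_uniq[of "cmp G x p" y "cmp G x' p'" y'] W c by metis
  then have "x = x' \<and> p = p'" using g_fact_uniq[of x p x' p'] W by metis
  with 1 show ?thesis by simp
qed

lemma seg_wit_S:
  assumes S: "S \<subseteq> mor G" and w: "wit l m n x p y" and inS: "x \<in> S" "p \<in> S" "y \<in> S"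
  shows "seg (G\<lparr>mor := S\<rparr>) l m n = p"
  unfolding seg_def
proof (rule the_equality)
  show "\<exists>x' y'. x' \<in> mor (G\<lparr>mor := S\<rparr>) \<and> p \<in> mor (G\<lparr>mor := S\<rparr>) \<and> y' \<in> mor (G\<lparr>mor := S\<rparr>) \<and>
       src (G\<lparr>mor := S\<rparr>) x' = rng (G\<lparr>mor := S\<rparr>) p \<and> src (G\<lparr>mor := S\<rparr>) p = rng (G\<lparr>mor := S\<rparr>) y' \<and>
       l = cmp (G\<lparr>mor := S\<rparr>) (cmp (G\<lparr>mor := S\<rparr>) x' p) y' \<and> deg (G\<lparr>mor := S\<rparr>) x' = m \<and> deg (G\<lparr>mor := S\<rparr>) p = n - m"
    using w inS unfolding wit_def by auto
next
  fix p' assume "\<exists>x' y'. x' \<in> mor (G\<lparr>mor := S\<rparr>) \<and> p' \<in> mor (G\<lparr>mor := S\<rparr>) \<and> y' \<in> mor (G\<lparr>mor := S\<rparr>) \<and>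
       src (G\<lparr>mor := S\<rparr>) x' = rng (G\<lparr>mor := S\<rparr>) p' \<and> src (G\<lparr>mor := S\<rparr>) p' = rng (G\<lparr>mor := S\<rparr>) y' \<and>
       l = cmp (G\<lparr>mor := S\<rparr>) (cmp (G\<lparr>mor := S\<rparr>) x' p') y' \<and> deg (G\<lparr>mor := S\<rparr>) x' = m \<and> deg (G\<lparr>mor := S\<rparr>) p' = n - m"
  then obtain x' y' where "wit l m n x' p' y'" using S unfolding wit_def by auto
  then show "p' = p" using wit_uniq w by blast
qed

lemma seg_wit: "wit l m n x p y \<Longrightarrow> seg G l m n = p"
  using seg_wit_S[of "mor G" l m n x p y] unfolding wit_def by simp

lemma wit_ex: "l \<in> mor G \<Longrightarrow> m \<le> n \<Longrightarrow> n \<le> deg G l \<Longrightarrow> \<exists>x p y. wit l m n x p y"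
proof -
  assume l: "l \<in> mor G" "m \<le> n" "n \<le> deg G l"
  have "deg G l = n + (deg G l - n)" using l(3) by (auto simp: prod_eq_iff less_eq_prod_def)
  from g_fact_ex[OF l(1) this] obtain q y where q: "q \<in> mor G" "y \<in> mor G" "src G q = rng G y"
    "l = cmp G q y" "deg G q = n" by blast
  have "deg G q = m + (n - m)" using q l(2) by (auto simp: prod_eq_iff less_eq_prod_def)
  from g_fact_ex[OF q(1) this] obtain x p where "x \<in> mor G" "p \<in> mor G" "src G x = rng G p"
    "q = cmp G x p" "deg G x = m" "deg G p = n - m" by blast
  then have "wit l m n x p y" unfolding wit_def using q g_cmp by auto
  then show ?thesis by blast
qed

lemma cmp_mor: "x \<in> mor G \<Longrightarrow> y \<in> mor G \<Longrightarrow> src G x = rng G y \<Longrightarrow> cmp G x y \<in> mor G"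
  and rng_cmp: "x \<in> mor G \<Longrightarrow> y \<in> mor G \<Longrightarrow> src G x = rng G y \<Longrightarrow> rng G (cmp G x y) = rng G x"
  and src_cmp: "x \<in> mor G \<Longrightarrow> y \<in> mor G \<Longrightarrow> src G x = rng G y \<Longrightarrow> src G (cmp G x y) = src G y"
  using g_cmp by auto

lemmas cmp_simps = cmp_mor rng_cmp src_cmp g_assoc g_deg_cmp

lemma wit_window:
  assumes w: "wit l m (m + t) x om y" and rs: "r + s \<le> t"
  shows "seg G l (m + r) (m + r + s) = seg G om r (r + s)"
proof -
  note W = w[unfolded wit_def]
  have dom: "deg G om = t" using W by (simp add: prod_eq_iff)
  have "r \<le> r + s" "r + s \<le> deg G om" using rs dom by (auto simp: less_eq_prod_def)
  from wit_ex[OF _ this] W obtain x1 p y1 where w1: "wit om r (r + s) x1 p y1" by blast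
  note W1 = w1[unfolded wit_def]
  have "wit l (m + r) (m + r + s) (cmp G x x1) p (cmp G y1 y)"
    unfolding wit_def using W W1 by (auto simp: cmp_simps prod_eq_iff)
  then show ?thesis using seg_wit w1 by metis
qed

end

section \<open>The monoid of loops at a vertex carrying a quartet\<close>

locale quart =
  fixes G :: "('a, 'b) kgraph2_scheme" and a b :: nat and v a1 a2 b1 b2 :: 'a
  assumes G2: "is_2graph G" and apos: "0 < a" and bpos: "0 < b"
    and Q: "aperiodic_quartet G a b v a1 a2 b1 b2"
begin

lemmas cS = cmp_simps[OF G2]

definition Ls :: "'a set" where "Ls = {x. x \<in> mor G \<and> rng G x = v \<and> src G x = v}"

lemma Q': "a1 \<noteq> a2" "b1 \<noteq> b2" "a1 \<in> Ls" "a2 \<in> Ls" "b1 \<in> Ls" "b2 \<in> Ls"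
  "deg G a1 = (a, 0)" "deg G a2 = (a, 0)" "deg G b1 = (0, b)" "deg G b2 = (0, b)"
  "cmp G b2 a1 = cmp G a1 b2" "cmp G b2 a2 = cmp G a2 b2"
  "cmp G b1 a1 = cmp G a2 b1" "cmp G b1 a2 = cmp G a1 b1"
  using Q unfolding aperiodic_quartet_def paths_rng_deg_src_def Ls_def by auto

lemma v_props: "v \<in> mor G" "rng G v = v" "src G v = v" "v \<in> Ls"
proof -
  have a1: "a1 \<in> mor G" "rng G a1 = v" using Q'(3) unfolding Ls_def by auto
  show "v \<in> mor G" using g_rs[OF G2 a1(1)] a1 by auto
  show "rng G v = v" "src G v = v" using g_idem[OF G2 a1(1)] a1 by auto
  then show "v \<in> Ls" using \<open>v \<in> mor G\<close> unfolding Ls_def by auto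
qed

lemma Ls_cmp [simp]: "x \<in> Ls \<Longrightarrow> y \<in> Ls \<Longrightarrow> cmp G x y \<in> Ls"
  unfolding Ls_def using cS by auto

lemma Ls_assoc [simp]: "x \<in> Ls \<Longrightarrow> y \<in> Ls \<Longrightarrow> z \<in> Ls \<Longrightarrow> cmp G (cmp G x y) z = cmp G x (cmp G y z)"
  unfolding Ls_def using cS by auto

lemma Ls_unit [simp]: assumes "x \<in> Ls" shows "cmp G v x = x" "cmp G x v = x"
proof -
  have x: "x \<in> mor G" "rng G x = v" "src G x = v" using assms unfolding Ls_def by auto
  show "cmp G v x = x" "cmp G x v = x" using g_unit[OF G2 x(1)] x(2,3) by metis+
qed

lemma Ls_deg: "x \<in> Ls \<Longrightarrow> y \<in> Ls \<Longrightarrow> deg G (cmp G x y) = deg G x + deg G y"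
  unfolding Ls_def using cS by auto

definition al :: "bool \<Rightarrow> 'a" where "al w = (if w then a1 else a2)"
definition be :: "bool \<Rightarrow> 'a" where "be z = (if z then b1 else b2)"

lemma al_Ls [simp]: "al w \<in> Ls" and be_Ls [simp]: "be z \<in> Ls"
  unfolding al_def be_def using Q' by auto

lemma deg_al: "deg G (al w) = (a, 0)" and deg_be: "deg G (be z) = (0, b)"
  unfolding al_def be_def using Q' by auto

lemma swap: "cmp G (al w) (be z) = cmp G (be z) (al (w \<noteq> z))"
  unfolding al_def be_def using Q' by auto

definition PA :: "bool list \<Rightarrow> 'a" where "PA ws = foldr (\<lambda>w acc. cmp G (al w) acc) ws v"
definition PB :: "bool list \<Rightarrow> 'a" where "PB zs = foldr (\<lambda>z acc. cmp G (be z) acc) zs v"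

lemma PA_simps [simp]: "PA [] = v" "PA (w # ws) = cmp G (al w) (PA ws)"
  unfolding PA_def by auto
lemma PB_simps [simp]: "PB [] = v" "PB (z # zs) = cmp G (be z) (PB zs)"
  unfolding PB_def by auto

lemma PA_Ls [simp]: "PA ws \<in> Ls"
  by (induction ws) (auto simp: v_props)
lemma PB_Ls [simp]: "PB zs \<in> Ls"
  by (induction zs) (auto simp: v_props)

lemma PA_app: "PA (xs @ ys) = cmp G (PA xs) (PA ys)"
  by (induction xs) auto
lemma PB_app: "PB (xs @ ys) = cmp G (PB xs) (PB ys)"
  by (induction xs) auto

lemma deg_v: "deg G v = 0"
  using g_deg_rng[OF G2 v_props(1)] v_props(2) by simp

lemma deg_PA: "deg G (PA ws) = (length ws * a, 0)"
  by (induction ws) (auto simp: Ls_deg deg_al deg_v zero_prod_def)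
lemma deg_PB: "deg G (PB zs) = (0, length zs * b)"
  by (induction zs) (auto simp: Ls_deg deg_be deg_v zero_prod_def)

lemma comm1: "cmp G (PA ws) (be z) = cmp G (be z) (PA (map (\<lambda>w. w \<noteq> z) ws))"
proof (induction ws)
  case Nil then show ?case by simp
next
  case (Cons w ws)
  have "cmp G (PA (w # ws)) (be z) = cmp G (al w) (cmp G (PA ws) (be z))" by simp
  also have "\<dots> = cmp G (cmp G (al w) (be z)) (PA (map (\<lambda>w. w \<noteq> z) ws))" using Cons by simp
  also have "\<dots> = cmp G (be z) (PA (map (\<lambda>w. w \<noteq> z) (w # ws)))" by (simp add: swap)
  finally show ?case .
qed

definition par :: "bool list \<Rightarrow> bool" where "par zs = foldr (\<lambda>z p. z \<noteq> p) zs False"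

lemma par_simps [simp]: "par [] = False" "par (z # zs) = (z \<noteq> par zs)"
  unfolding par_def by auto

lemma comm: "cmp G (PA ws) (PB zs) = cmp G (PB zs) (PA (map (\<lambda>w. w \<noteq> par zs) ws))"
proof (induction zs arbitrary: ws)
  case Nil then show ?case by simp
next
  case (Cons z zs)
  have "cmp G (PA ws) (PB (z # zs)) = cmp G (cmp G (PA ws) (be z)) (PB zs)" by simp
  also have "\<dots> = cmp G (be z) (cmp G (PA (map (\<lambda>w. w \<noteq> z) ws)) (PB zs))" by (simp add: comm1)
  also have "\<dots> = cmp G (be z) (cmp G (PB zs) (PA (map (\<lambda>w. w \<noteq> par zs) (map (\<lambda>w. w \<noteq> z) ws))))"
    using Cons by simp
  also have "\<dots> = cmp G (PB (z # zs)) (PA (map (\<lambda>w. w \<noteq> par (z # zs)) ws))"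
    by (simp add: comp_def) (metis (no_types, lifting))
  finally show ?case .
qed

lemma Ls_mor: "x \<in> Ls \<Longrightarrow> x \<in> mor G" and Ls_rng: "x \<in> Ls \<Longrightarrow> rng G x = v"
  and Ls_src: "x \<in> Ls \<Longrightarrow> src G x = v"
  unfolding Ls_def by auto

lemma wit_Ls: "x \<in> Ls \<Longrightarrow> p \<in> Ls \<Longrightarrow> y \<in> Ls \<Longrightarrow> l = cmp G (cmp G x p) y \<Longrightarrow>
   deg G x = m \<Longrightarrow> deg G p = n - m \<Longrightarrow> wit G l m n x p y"
  unfolding wit_def[OF G2] using Ls_mor Ls_rng Ls_src by simp

lemma win_a:
  assumes "i < length W" "j \<le> length Z"
  shows "seg G (cmp G (PA W) (PB Z)) (i*a, j*b) (i*a + a, j*b) = al ((W!i) \<noteq> par (take j Z))"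
proof -
  define c where "c = par (take j Z)"
  define W' where "W' = map (\<lambda>w. w \<noteq> c) W"
  have li: "i < length W'" using assms W'_def by simp
  have Wd: "PA W' = cmp G (PA (take i W')) (cmp G (al (W'!i)) (PA (drop (Suc i) W')))"
    using PA_app[of "take i W'" "W'!i # drop (Suc i) W'"] id_take_nth_drop[OF li] by simp
  have Zd: "PB Z = cmp G (PB (take j Z)) (PB (drop j Z))"
    using PB_app[of "take j Z" "drop j Z"] by simp
  have "cmp G (PA W) (PB Z) = cmp G (cmp G (PA W) (PB (take j Z))) (PB (drop j Z))"
    using Zd by simp
  also have "\<dots> = cmp G (cmp G (PB (take j Z)) (PA W')) (PB (drop j Z))"
    by (simp only: comm W'_def c_def)
  also have "\<dots> = cmp G (cmp G (cmp G (PB (take j Z)) (PA (take i W'))) (al (W'!i)))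
        (cmp G (PA (drop (Suc i) W')) (PB (drop j Z)))"
    by (simp add: Wd)
  finally have eq: "cmp G (PA W) (PB Z) = \<dots>" .
  have "wit G (cmp G (PA W) (PB Z)) (i*a, j*b) (i*a + a, j*b)
     (cmp G (PB (take j Z)) (PA (take i W'))) (al (W'!i)) (cmp G (PA (drop (Suc i) W')) (PB (drop j Z)))"
    apply (rule wit_Ls)
    using eq li assms by (auto simp: Ls_deg deg_PA deg_PB deg_al min_def)
  then have "seg G (cmp G (PA W) (PB Z)) (i*a, j*b) (i*a + a, j*b) = al (W'!i)"
    by (rule seg_wit[OF G2])
  then show ?thesis using li W'_def c_def by simp
qed

lemma win_b:
  assumes "i \<le> length W" "j < length Z"
  shows "seg G (cmp G (PA W) (PB Z)) (i*a, j*b) (i*a, j*b + b) = be (Z!j)"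
proof -
  define c where "c = par (take j Z)"
  define W2 where "W2 = map (\<lambda>w. w \<noteq> c) (drop i W)"
  define W3 where "W3 = map (\<lambda>w. w \<noteq> Z!j) W2"
  have Zd: "PB Z = cmp G (PB (take j Z)) (cmp G (be (Z!j)) (PB (drop (Suc j) Z)))"
    using PB_app[of "take j Z" "Z!j # drop (Suc j) Z"] id_take_nth_drop[OF assms(2)] by simp
  have Wd: "PA W = cmp G (PA (take i W)) (PA (drop i W))"
    using PA_app[of "take i W" "drop i W"] by simp
  have "cmp G (PA W) (PB Z) = cmp G (PA (take i W)) (cmp G (cmp G (PA (drop i W)) (PB (take j Z)))
           (cmp G (be (Z!j)) (PB (drop (Suc j) Z))))"
    using Zd Wd by simp
  also have "\<dots> = cmp G (PA (take i W)) (cmp G (cmp G (PB (take j Z)) (PA W2))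
           (cmp G (be (Z!j)) (PB (drop (Suc j) Z))))"
    by (simp only: comm W2_def c_def)
  also have "\<dots> = cmp G (PA (take i W)) (cmp G (PB (take j Z)) (cmp G (cmp G (PA W2) (be (Z!j)))
             (PB (drop (Suc j) Z))))"
    by simp
  also have "\<dots> = cmp G (PA (take i W)) (cmp G (PB (take j Z)) (cmp G (cmp G (be (Z!j)) (PA W3))
             (PB (drop (Suc j) Z))))"
    by (simp only: comm1 W3_def)
  also have "\<dots> = cmp G (cmp G (cmp G (PA (take i W)) (PB (take j Z))) (be (Z!j)))
        (cmp G (PA W3) (PB (drop (Suc j) Z)))"
    by simp
  finally have eq: "cmp G (PA W) (PB Z) = \<dots>" .
  have "wit G (cmp G (PA W) (PB Z)) (i*a, j*b) (i*a, j*b + b)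
     (cmp G (PA (take i W)) (PB (take j Z))) (be (Z!j)) (cmp G (PA W3) (PB (drop (Suc j) Z)))"
    apply (rule wit_Ls)
    using eq assms by (auto simp: Ls_deg deg_PA deg_PB deg_be min_def)
  then show ?thesis by (rule seg_wit[OF G2])
qed

lemma par_False: "\<forall>z\<in>set zs. \<not> z \<Longrightarrow> par zs = False"
  by (induction zs) auto

lemma arith1:
  fixes A B c d M j s :: nat
  assumes "c \<le> M" "d \<le> M" "j < A * B" "s \<le> A"
  shows "(A * B - j - 1) * c + j * d + s \<le> (B * M + 1) * A - M"
proof -
  obtain k where K: "A * B = Suc j + k" using assms(3) less_imp_Suc_add by blast
  have "(A * B - j - 1) * c + j * d \<le> k * M + j * M"
    using K assms by (simp add: add_mono mult_le_mono2)
  also have "\<dots> = (A * B - 1) * M" using K by (simp add: add_mult_distrib)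
  finally have 1: "(A * B - j - 1) * c + j * d \<le> (A * B - 1) * M" .
  have e: "A * (B * M) = M + (j + k) * M" using K by (metis mult.assoc mult_Suc add_Suc)
  have 2: "(B * M + 1) * A - M = (A * B - 1) * M + A"
    using K e by (simp add: algebra_simps)
  show ?thesis using 1 2 assms(4) by linarith
qed

lemma no_lp:
  assumes mn: "m \<noteq> n"
  shows "\<exists>l\<in>mor G. rng G l = v \<and> src G l = v \<and> sup m n \<le> deg G l \<and>
     seg G l m (m + (deg G l - sup m n)) \<noteq> seg G l n (n + (deg G l - sup m n))"
proof -
  obtain m1 m2 where m: "m = (m1, m2)" by force
  obtain n1 n2 where n: "n = (n1, n2)" by force
  define M1 where "M1 = max m1 n1"
  define M2 where "M2 = max m2 n2"
  have supmn: "sup m n = (M1, M2)" using m n M1_def M2_def by (simp add: sup_nat_def)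
  define K where "K = a * b"
  have Kpos: "0 < K" using apos bpos K_def by simp
  define P where "P = b * M1 + 1"
  define R where "R = a * M2 + 1"
  define i0 where "i0 = b * m1"
  define j0 where "j0 = a * m2"
  define W where "W = map (\<lambda>i. i = i0) [0..<P]"
  define Z where "Z = map (\<lambda>j. j = j0) [0..<R]"
  define lam where "lam = cmp G (PA W) (PB Z)"
  have lamL: "lam \<in> Ls" using lam_def by simp
  have dlam: "deg G lam = (P * a, R * b)" using lam_def W_def Z_def by (simp add: Ls_deg deg_PA deg_PB)
  define t where "t = deg G lam - sup m n"
  have t: "t = (P * a - M1, R * b - M2)" using t_def dlam supmn by simp
  have Pa: "M1 \<le> P * a" "M2 \<le> R * b"
  proof -
    have "M1 \<le> b * M1" "M2 \<le> a * M2" using apos bpos by simp_all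
    moreover have "b * M1 \<le> P * a" "a * M2 \<le> R * b" unfolding P_def R_def using apos bpos
      by (metis Suc_eq_plus1 le_add1 mult_le_mono1 nat_mult_1_right One_nat_def Suc_leI mult_le_mono2 order_trans)+
    ultimately show "M1 \<le> P * a" "M2 \<le> R * b" by linarith+
  qed
  have le: "sup m n \<le> deg G lam" using supmn dlam Pa by simp
  have ne: "seg G lam m (m + t) \<noteq> seg G lam n (n + t)"
  proof
    assume eq: "seg G lam m (m + t) = seg G lam n (n + t)"
    have lm: "lam \<in> mor G" using lamL Ls_mor by blast
    have "m \<le> m + t" "m + t \<le> deg G lam" "n \<le> n + t" "n + t \<le> deg G lam"
      using t dlam Pa m n M1_def M2_def by auto
    then obtain x om y x' om' y' where w: "wit G lam m (m + t) x om y" and w': "wit G lam n (n + t) x' om' y'"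
      using wit_ex[OF G2 lm] by meson
    have "om = om'" using eq seg_wit[OF G2 w] seg_wit[OF G2 w'] by simp
    then have step: "\<And>r s. r + s \<le> t \<Longrightarrow> seg G lam (m + r) (m + r + s) = seg G lam (n + r) (n + r + s)"
      using wit_window[OF G2 w] wit_window[OF G2 w'] by simp
    define X where "X = (\<lambda>j. ((K - j) * m1 + j * n1, (K - j) * m2 + j * n2))"
    have chain: "seg G lam (X 0) (X 0 + s) = seg G lam (X j) (X j + s)"
      if s: "fst s \<le> a" "snd s \<le> b" and j: "j \<le> K" for s j
      using j
    proof (induction j)
      case 0 then show ?case by simp
    next
      case (Suc j)
      obtain k where k: "K = Suc j + k" using Suc.prems less_eq_Suc_le le_Suc_ex by blast
      define r where "r = (k * m1 + j * n1, k * m2 + j * n2)"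
      have 1: "m + r = X j" "n + r = X (Suc j)" using k unfolding X_def r_def m n by simp_all
      have "fst (r + s) \<le> fst t"
        using arith1[of m1 M1 n1 j a b "fst s"] k s M1_def K_def t P_def unfolding r_def by simp
      moreover have "snd (r + s) \<le> snd t"
        using arith1[of m2 M2 n2 j b a "snd s"] k s M2_def K_def t R_def unfolding r_def
        by (simp add: mult.commute[of a b])
      ultimately have "r + s \<le> t" by (simp add: less_eq_prod_def)
      from step[OF this] 1 Suc show ?case by simp
    qed
    have X0: "X 0 = (i0 * a, j0 * b)" and XK: "X K = ((b * n1) * a, (a * n2) * b)"
      unfolding X_def K_def i0_def j0_def by simp_all
    have lW: "length W = P" and lZ: "length Z = R" using W_def Z_def by simp_all
    have bounds: "i0 < P" "b * n1 < P" "j0 < R" "a * n2 < R"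
      unfolding i0_def P_def j0_def R_def M1_def M2_def by (auto intro!: le_imp_less_Suc mult_le_mono2)
    show False
    proof (cases "m2 = n2")
      case False
      have "seg G lam (X 0) (X 0 + (0, b)) = seg G lam (X K) (X K + (0, b))"
        using chain[of "(0, b)" K] by simp
      also have "seg G lam (X 0) (X 0 + (0, b)) = be (Z ! j0)"
        unfolding X0 lam_def using win_b[of i0 W j0 Z] lW lZ bounds by simp
      also have "seg G lam (X K) (X K + (0, b)) = be (Z ! (a * n2))"
        unfolding XK lam_def using win_b[of "b * n1" W "a * n2" Z] lW lZ bounds by simp
      finally have "be (Z ! j0) = be (Z ! (a * n2))" .
      moreover have "Z ! j0 = True" "Z ! (a * n2) = False"
        using bounds False apos unfolding Z_def j0_def by simp_all
      ultimately show False using Q'(2) unfolding be_def by simp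
    next
      case True
      have par0: "par (take j0 Z) = False"
        by (rule par_False) (auto simp: Z_def in_set_conv_nth)
      have "seg G lam (X 0) (X 0 + (a, 0)) = seg G lam (X K) (X K + (a, 0))"
        using chain[of "(a, 0)" K] by simp
      also have "seg G lam (X 0) (X 0 + (a, 0)) = al (W ! i0 \<noteq> par (take j0 Z))"
        unfolding X0 lam_def using win_a[of i0 W j0 Z] lW lZ bounds by simp
      also have "seg G lam (X K) (X K + (a, 0)) = al (W ! (b * n1) \<noteq> par (take j0 Z))"
        unfolding XK lam_def using win_a[of "b * n1" W j0 Z] lW lZ bounds True j0_def by simp
      finally have "al (W ! i0) = al (W ! (b * n1))" using par0 by simp
      moreover have "m1 \<noteq> n1" using True mn m n by simp
      then have "W ! i0 = True" "W ! (b * n1) = False"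
        using bounds bpos unfolding W_def i0_def by simp_all
      ultimately show False using Q'(1) unfolding al_def by simp
    qed
  qed
  show ?thesis
    using lamL le ne t_def unfolding Ls_def by auto
qed

end

section \<open>Passing to Gamma\<close>

lemma her_step:
  assumes G2: "is_2graph G" and her: "hereditary G H" and y: "y \<in> mor G" and ns: "src G y \<notin> H"
  shows "rng G y \<notin> H"
proof
  assume "rng G y \<in> H"
  moreover have "path_le G (rng G y) (src G y)" unfolding path_le_def using y by blast
  moreover have "src G y \<in> verts G" by (rule g_src_vert[OF G2 y])
  ultimately have "src G y \<in> H" using her unfolding hereditary_def by blast
  with ns show False by simp
qed

lemma seg_Gamma:
  assumes G2: "is_2graph G" and her: "hereditary G H" and l: "l \<in> mor G" "src G l \<notin> H"
    and pq: "p \<le> q" "q \<le> deg G l"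
  shows "seg (Gamma G H) l p q = seg G l p q"
proof -
  obtain x pp y where w: "wit G l p q x pp y" using wit_ex[OF G2 l(1) pq] by blast
  note W = w[unfolded wit_def[OF G2]]
  have "src G l = src G y" using W cmp_simps[OF G2] by metis
  then have 1: "src G y \<notin> H" using l by simp
  have 2: "src G pp \<notin> H" using her_step[OF G2 her _ 1] W by simp
  have 3: "src G x \<notin> H" using her_step[OF G2 her _ 2] W by simp
  have "seg (G\<lparr>mor := {l \<in> mor G. src G l \<notin> H}\<rparr>) l p q = pp"
    by (rule seg_wit_S[OF G2 _ w]) (use W 1 2 3 in auto)
  then show ?thesis using seg_wit[OF G2 w] unfolding Gamma_def by simp
qed

theorem proposition3p9:
  fixes G :: "('a, 'b) kgraph2_scheme"
  assumes "is_2graph G"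
    and "row_finite G"
    and "no_sources G"
    and "\<forall>u\<in>verts G. \<exists>a b a1 a2 b1 b2. 0 < a \<and> 0 < b \<and> aperiodic_quartet G a b u a1 a2 b1 b2"
  shows "strongly_aperiodic G"
  unfolding strongly_aperiodic_def
proof (intro allI impI)
  note G2 = assms(1)
  fix H assume H: "H \<subseteq> verts G \<and> H \<noteq> verts G \<and> hereditary G H \<and> saturated G H"
  then have her: "hereditary G H" by simp
  show "aperiodic (Gamma G H)" unfolding aperiodic_def no_local_periodicity_def
  proof (intro ballI allI impI)
    fix v and m n :: "nat \<times> nat" assume v: "v \<in> verts (Gamma G H)" and mn: "m \<noteq> n"
    have vm: "v \<in> mor G" "src G v \<notin> H" "deg G v = 0" using v unfolding verts_def Gamma_def by auto
    have vv: "v \<in> verts G" using vm unfolding verts_def by simp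
    have "src G v = v" using g_deg0[OF G2 vm(1,3)] by simp
    with vm have vH: "v \<notin> H" by simp
    from assms(4) vv obtain a b a1 a2 b1 b2 where q: "0 < a" "0 < b" "aperiodic_quartet G a b v a1 a2 b1 b2"
      by blast
    interpret quart G a b v a1 a2 b1 b2 using G2 q by unfold_locales
    from no_lp[OF mn] obtain l where l: "l \<in> mor G" "rng G l = v" "src G l = v" "sup m n \<le> deg G l"
      and ne: "seg G l m (m + (deg G l - sup m n)) \<noteq> seg G l n (n + (deg G l - sup m n))" by blast
    have lH: "src G l \<notin> H" using l vH by simp
    have le: "m \<le> m + (deg G l - sup m n)" "m + (deg G l - sup m n) \<le> deg G l"
      "n \<le> n + (deg G l - sup m n)" "n + (deg G l - sup m n) \<le> deg G l"
      using l(4) by (auto simp: less_eq_prod_def sup_nat_def)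
    have "seg (Gamma G H) l m (m + (deg G l - sup m n)) \<noteq> seg (Gamma G H) l n (n + (deg G l - sup m n))"
      using ne seg_Gamma[OF G2 her l(1) lH le(1,2)] seg_Gamma[OF G2 her l(1) lH le(3,4)] by simp
    then show "\<exists>l\<in>mor (Gamma G H). rng (Gamma G H) l = v \<and> sup m n \<le> deg (Gamma G H) l \<and>
            seg (Gamma G H) l m (m + (deg (Gamma G H) l - sup m n)) \<noteq>
            seg (Gamma G H) l n (n + (deg (Gamma G H) l - sup m n))"
      using l lH unfolding Gamma_def by auto
  qed
qed

end
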